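(* Let $\epsilon\in(0,1/2)$ and $\delta\in(0,1/2]$. Let $N\ge s$ be integers with $s\ge 10\epsilon^{-2}\ln(1/\delta)$. Let $w_1,\dots,w_N>0$ be weights with total $W=\sum_{i=1}^N w_i$, such that $w_i\le\frac{\epsilon}{2s}W$ for all $i$. Let $t_1,\dots,t_N$ be i.i.d. exponential random variables with rate $1$, set $v_i=w_i/t_i$, and let $u$ be the $s$-th largest of $v_1,\dots,v_N$. Then $$\Pr\!\left[\,\Big|\frac{s\,u}{W}-1\Big|\le 2\epsilon\right]\ge 1-\delta.$$
   Context: An exponential random variable with rate $1$ has density $e^{-x}$ for $x\ge 0$. *)

theory Defs
  imports "HOL-Probability.Probability"
begin

definition kth_largest :: "nat \<Rightarrow> (nat \<Rightarrow> real) \<Rightarrow> nat \<Rightarrow> real" where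
  "kth_largest k v N = rev (sort (map v [0..<N])) ! (k - 1)"

end

theory Submission
  imports Defs
begin
lemma R1:
  fixes e s p :: real
  assumes "0 < e" "e < 1/2" "0 < s" "0 \<le> p" "p \<le> s / (1 + 2*e)"
  shows "- e * s + (exp e - 1) * p \<le> - (e^2 * s / 2)"
proof -
  have e1: "exp e - 1 \<le> e + e^2" using exp_bound[of e] assms by simp
  have e0: "0 \<le> exp e - 1" using exp_ge_add_one_self[of e] assms by simp
  have "(exp e - 1) * p \<le> (e + e^2) * (s / (1 + 2*e))"
    using e1 e0 assms by (intro mult_mono) auto
  also have "\<dots> = e * s - e^2 * s / (1 + 2*e)"
    using assms by (simp add: field_simps power2_eq_square)
  also have "e^2 * s / (1 + 2*e) \<ge> e^2 * s / 2"
    using assms by (intro divide_left_mono) auto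
  ultimately show ?thesis by linarith
qed

lemma R2:
  fixes e s q :: real
  assumes "0 < e" "e < 1/2" "0 < s" "q \<ge> s / (1 - 3*e/2)"
  shows "e * s + (exp (-e) - 1) * q \<le> - (e^2 * s / 2)"
proof -
  have "1 + e \<le> exp e" by simp
  then have "exp (-e) \<le> 1 / (1 + e)" using assms by (simp add: exp_minus field_simps)
  then have c: "exp (-e) - 1 \<le> - (e / (1 + e))" using assms by (simp add: field_simps)
  have D: "0 < 1 - 3*e/2" using assms by simp
  have q0: "0 \<le> q" using assms D order_trans[of 0 "s / (1 - 3*e/2)" q] by simp
  have "(exp (-e) - 1) * q \<le> - (e / (1 + e)) * q" using c q0 by (intro mult_right_mono) auto
  also have "\<dots> \<le> - (e / (1 + e)) * (s / (1 - 3*e/2))"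
    using assms by (intro mult_left_mono_neg) auto
  also have "\<dots> = - (e * s / ((1 + e) * (1 - 3*e/2)))" by simp
  also have "\<dots> \<le> - (e * s * (1 + e/2))"
  proof -
    have P: "0 < (1 + e) * (1 - 3*e/2)" using assms D by simp
    have "e * s * (1 + e/2) * ((1 + e) * (1 - 3*e/2)) \<le> e * s"
    proof -
      have "(1 + e/2) * ((1 + e) * (1 - 3*e/2)) \<le> 1"
        using assms by (simp add: algebra_simps power2_eq_square)
      then have "e * s * ((1 + e/2) * ((1 + e) * (1 - 3*e/2))) \<le> e * s * 1"
        using assms by (intro mult_left_mono) auto
      then show ?thesis by (simp add: mult_ac)
    qed
    then show ?thesis using P by (simp add: field_simps)
  qed
  finally show ?thesis by (simp add: algebra_simps power2_eq_square)
qed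

lemma R3:
  fixes y r :: real
  assumes "0 \<le> y" "y \<le> r"
  shows "y / (1 + r) \<le> 1 - exp (- y)"
proof -
  have "1 + y \<le> exp y" by simp
  then have "exp (-y) \<le> 1 / (1 + y)" using assms by (simp add: exp_minus field_simps)
  moreover have "y / (1 + r) \<le> y / (1 + y)" using assms by (intro divide_left_mono) auto
  moreover have "1 - 1 / (1 + y) = y / (1 + y)" using assms by (simp add: field_simps)
  ultimately show ?thesis by linarith
qed
lemma R4:
  fixes d X :: real
  assumes "0 < d" "d \<le> 1/2" "5 * ln (1/d) \<le> X"
  shows "exp (- X) \<le> d / 2"
proof -
  have L: "ln 2 \<le> ln (1/d)" using assms by (subst ln_le_cancel_iff) (auto simp: field_simps)
  have l2: "0 < ln (2::real)" by simp
  have A: "5 * (- ln d) \<le> X" using assms by (simp add: ln_div)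
  have L': "ln 2 \<le> - ln d" using L assms by (simp add: ln_div)
  have "- X \<le> ln d - ln 2" using A L' l2 by linarith
  also have "\<dots> = ln (d / 2)" using assms by (simp add: ln_div)
  finally have "exp (- X) \<le> exp (ln (d/2))" by simp
  then show ?thesis using assms by simp
qed

lemma card_sum: "real (card {i. i < (N::nat) \<and> Q i}) = (\<Sum>i<N. if Q i then 1 else 0 :: real)"
proof -
  have e: "{i. i < N \<and> Q i} = {..<N} \<inter> {x. Q x}" by auto
  have "(\<Sum>i<N. if Q i then 1 else 0 :: real) = (\<Sum>i\<in>{..<N} \<inter> {x. Q x}. 1) + (\<Sum>i\<in>{..<N} \<inter> - {x. Q x}. 0)"
    by (rule sum.If_cases) simp
  then show ?thesis by (simp add: e)
qed

lemma spow: fixes e L s :: real assumes "0 < e" "s \<ge> 10 * e powi (-2) * L" shows "5 * L \<le> e^2 * s / 2"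
proof -
  have "e powi (-2) = 1 / e^2" by (simp add: power_int_minus_divide)
  then have "10 * L / e^2 \<le> s" using assms by simp
  then show ?thesis using assms by (simp add: field_simps)
qed

lemma (in prob_space) exp_interval:
  assumes D: "distributed M lborel X (exponential_density 1)" and c: "0 \<le> c"
  shows "prob {x\<in>space M. X x \<in> {0<..c}} = 1 - exp (- c)"
proof -
  have mX[measurable]: "X \<in> borel_measurable M" using distributed_measurable[OF D] by simp
  have e: "{x\<in>space M. X x \<in> {0<..c}} = {x\<in>space M. X x \<le> c} - {x\<in>space M. X x \<le> 0}" using c by auto
  have s1: "{x\<in>space M. X x \<le> c} \<in> events" by measurable
  have s2: "{x\<in>space M. X x \<le> 0} \<in> events" by measurable
  have "prob ({x\<in>space M. X x \<le> c} - {x\<in>space M. X x \<le> 0}) = prob {x\<in>space M. X x \<le> c} - prob {x\<in>space M. X x \<le> 0}"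
    by (rule finite_measure_Diff[OF s1 s2]) (use c in auto)
  then have "prob {x\<in>space M. X x \<in> {0<..c}} = prob {x\<in>space M. X x \<le> c} - prob {x\<in>space M. X x \<le> 0}"
    by (simp only: e)
  also have "\<dots> = (1 - exp (- c)) - (1 - exp 0)"
    using exponential_distributedD_le[OF D c] exponential_distributedD_le[OF D order_refl] by simp
  finally show ?thesis by simp
qed
lemma (in prob_space) mgf_indicators:
  fixes t :: "nat \<Rightarrow> 'a \<Rightarrow> real" and A :: "nat \<Rightarrow> real set"
  assumes I: "finite I" and ind: "indep_vars (\<lambda>_. borel) t I"
    and meas: "\<And>i. i\<in>I \<Longrightarrow> t i \<in> borel_measurable M"
    and A: "\<And>i. i\<in>I \<Longrightarrow> A i \<in> sets borel"
  shows "(\<integral>x. exp (l * (\<Sum>i\<in>I. indicator (A i) (t i x))) \<partial>M)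
     = (\<Prod>i\<in>I. 1 + (exp l - 1) * prob {x\<in>space M. t i x \<in> A i})"
proof -
  define Y where "Y i x = exp (l * indicator (A i) (t i x))" for i x
  have Yeq: "Y i x = 1 + (exp l - 1) * indicator (A i) (t i x)" for i x
    by (simp add: Y_def indicator_def)
  have indY: "indep_vars (\<lambda>_. borel) Y I"
    unfolding Y_def
    by (rule indep_vars_compose2[OF ind, where Y="\<lambda>i y. exp (l * indicator (A i) y)"])
       (use A in auto)
  have mY: "Y i \<in> borel_measurable M" if "i \<in> I" for i
    unfolding Y_def using meas[OF that] A[OF that] by measurable
  have intY: "integrable M (Y i)" if "i \<in> I" for i
    by (rule integrable_const_bound[where B="max 1 (exp l)"]) (auto simp: Y_def indicator_def mY[OF that])
  have intY': "(\<integral>x. Y i x \<partial>M) = 1 + (exp l - 1) * prob {x\<in>space M. t i x \<in> A i}" if "i \<in> I" for i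
  proof -
    have s: "{x\<in>space M. t i x \<in> A i} \<in> sets M" using meas[OF that] A[OF that] by measurable
    have "(\<integral>x. Y i x \<partial>M) = (\<integral>x. 1 + (exp l - 1) * indicator {x\<in>space M. t i x \<in> A i} x \<partial>M)"
      by (rule Bochner_Integration.integral_cong[OF refl]) (auto simp: Yeq indicator_def)
    also have "\<dots> = 1 + (exp l - 1) * prob {x\<in>space M. t i x \<in> A i}"
      using s by (subst Bochner_Integration.integral_add) (auto simp: prob_space integrable_indicator_iff less_top[symmetric])
    finally show ?thesis .
  qed
  have "(\<integral>x. exp (l * (\<Sum>i\<in>I. indicator (A i) (t i x))) \<partial>M) = (\<integral>x. (\<Prod>i\<in>I. Y i x) \<partial>M)"
    by (simp only: Y_def sum_distrib_left exp_sum[OF I])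
  also have "\<dots> = (\<Prod>i\<in>I. \<integral>x. Y i x \<partial>M)"
    by (rule indep_vars_lebesgue_integral[OF I indY intY])
  also have "\<dots> = (\<Prod>i\<in>I. 1 + (exp l - 1) * prob {x\<in>space M. t i x \<in> A i})"
    by (intro prod.cong refl intY')
  finally show ?thesis .
qed
lemma (in prob_space) chernoff_gen:
  fixes t :: "nat \<Rightarrow> 'a \<Rightarrow> real" and A :: "nat \<Rightarrow> real set"
  assumes I: "finite I" and ind: "indep_vars (\<lambda>_. borel) t I"
    and meas: "\<And>i. i\<in>I \<Longrightarrow> t i \<in> borel_measurable M"
    and A: "\<And>i. i\<in>I \<Longrightarrow> A i \<in> sets borel"
  shows "prob {x\<in>space M. l * c \<le> l * (\<Sum>i\<in>I. indicator (A i) (t i x))}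
     \<le> exp (- l * c + (exp l - 1) * (\<Sum>i\<in>I. prob {x\<in>space M. t i x \<in> A i}))"
proof -
  define S where "S x = (\<Sum>i\<in>I. indicator (A i) (t i x) :: real)" for x
  have mS: "S \<in> borel_measurable M" unfolding S_def
    by (intro borel_measurable_sum) (use meas A in measurable)
  have Sb: "\<bar>l * S x\<bar> \<le> \<bar>l\<bar> * real (card I)" for x
  proof -
    have "0 \<le> S x" unfolding S_def by (intro sum_nonneg) auto
    moreover have "S x \<le> real (card I) * 1" unfolding S_def
      by (intro sum_bounded_above) (auto simp: indicator_def)
    ultimately show ?thesis by (simp add: abs_mult mult_left_mono)
  qed
  have intE: "integrable M (\<lambda>x. exp (l * S x))"
  proof (rule integrable_const_bound[where B="exp (\<bar>l\<bar> * real (card I))"])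
    show "AE x in M. norm (exp (l * S x)) \<le> exp (\<bar>l\<bar> * real (card I))"
      using Sb by (auto intro!: AE_I2 simp: abs_le_iff)
  qed (use mS in measurable)
  have "prob {x\<in>space M. l * c \<le> l * S x} = prob {x\<in>space M. exp (l * c) \<le> exp (l * S x)}"
    by simp
  also have "\<dots> \<le> (\<integral>x. exp (l * S x) \<partial>M) / exp (l * c)"
    by (rule integral_Markov_inequality_measure[OF intE, where A="space M"]) auto
  also have "(\<integral>x. exp (l * S x) \<partial>M) = (\<Prod>i\<in>I. 1 + (exp l - 1) * prob {x\<in>space M. t i x \<in> A i})"
    unfolding S_def by (rule mgf_indicators[OF I ind meas A])
  also have "\<dots> \<le> (\<Prod>i\<in>I. exp ((exp l - 1) * prob {x\<in>space M. t i x \<in> A i}))"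
  proof (intro prod_mono conjI)
    fix i assume "i \<in> I"
    have p: "0 \<le> prob {x\<in>space M. t i x \<in> A i}" "prob {x\<in>space M. t i x \<in> A i} \<le> 1" by auto
    have "0 < exp l" by simp
    then have "-1 \<le> (exp l - 1) * prob {x\<in>space M. t i x \<in> A i}"
    proof (cases "exp l \<le> 1")
      case True
      have "(exp l - 1) * 1 \<le> (exp l - 1) * prob {x\<in>space M. t i x \<in> A i}"
        by (rule mult_left_mono_neg) (use p True in auto)
      then show ?thesis using \<open>0 < exp l\<close> by (smt (verit))
    next
      case False
      have "0 \<le> (exp l - 1) * prob {x\<in>space M. t i x \<in> A i}"
        using p False by (intro mult_nonneg_nonneg) auto
      then show ?thesis by linarith
    qed
    then show "0 \<le> 1 + (exp l - 1) * prob {x\<in>space M. t i x \<in> A i}" by simp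
    show "1 + (exp l - 1) * prob {x\<in>space M. t i x \<in> A i} \<le> exp ((exp l - 1) * prob {x\<in>space M. t i x \<in> A i})"
      using exp_ge_add_one_self by (simp add: add.commute)
  qed
  also have "\<dots> = exp ((exp l - 1) * (\<Sum>i\<in>I. prob {x\<in>space M. t i x \<in> A i}))"
    by (simp add: exp_sum[OF I] sum_distrib_left)
  finally have "prob {x\<in>space M. l * c \<le> l * S x} \<le> exp ((exp l - 1) * (\<Sum>i\<in>I. prob {x\<in>space M. t i x \<in> A i})) / exp (l * c)"
    by (simp add: divide_right_mono)
  then show ?thesis by (simp add: S_def exp_add[symmetric] exp_diff[symmetric] mult_ac)
qed
lemma count_eq:
  fixes v :: "nat \<Rightarrow> real"
  shows "length (filter P (rev (sort (map v [0..<N])))) = card {i. i < N \<and> P (v i)}"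
proof -
  have "length (filter P (rev (sort (map v [0..<N])))) = size (mset (filter P (rev (sort (map v [0..<N])))))"
    by (rule size_mset[symmetric])
  also have "\<dots> = size (mset (filter P (map v [0..<N])))"
    by (simp only: mset_filter mset_rev mset_sort)
  also have "\<dots> = card {i. i < N \<and> P (v i)}"
    by (simp only: size_mset length_filter_conv_card length_map length_upt)
       (intro arg_cong[where f=card] Collect_cong, auto)
  finally show ?thesis .
qed

lemma kth_largest_iff:
  fixes v :: "nat \<Rightarrow> real" and P :: "real \<Rightarrow> bool"
  assumes up: "\<And>x y. P x \<Longrightarrow> x \<le> y \<Longrightarrow> P y" and s: "1 \<le> s" "s \<le> N"
  shows "P (kth_largest s v N) \<longleftrightarrow> s \<le> card {i. i < N \<and> P (v i)}"
proof -
  define L where "L = rev (sort (map v [0..<N]))"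
  have len: "length L = N" by (simp add: L_def)
  have sw: "sorted_wrt (\<lambda>x y. y \<le> x) L"
    unfolding L_def sorted_wrt_rev using sorted_sort[of "map v [0..<N]"] by simp
  have mono: "L ! j \<le> L ! i" if "i \<le> j" "j < N" for i j
  proof (cases "i = j")
    case False
    then show ?thesis using sorted_wrt_nth_less[OF sw, of i j] that len by auto
  qed simp
  define K where "K = {j. j < length L \<and> P (L ! j)}"
  have cK: "card K = card {i. i < N \<and> P (v i)}"
    using count_eq[of P v N] by (simp add: K_def L_def length_filter_conv_card)
  have k: "kth_largest s v N = L ! (s - 1)" by (simp add: kth_largest_def L_def)
  show ?thesis
  proof
    assume "P (kth_largest s v N)"
    then have P1: "P (L ! (s - 1))" using k by simp
    have "{0..<s} \<subseteq> K"
    proof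
      fix j assume "j \<in> {0..<s}"
      then have "L ! (s - 1) \<le> L ! j" "j < length L" using s len by (auto intro: mono)
      then show "j \<in> K" using P1 up unfolding K_def by blast
    qed
    then have "card {0..<s} \<le> card K" by (intro card_mono) (auto simp: K_def)
    then show "s \<le> card {i. i < N \<and> P (v i)}" using cK by simp
  next
    assume c: "s \<le> card {i. i < N \<and> P (v i)}"
    show "P (kth_largest s v N)"
    proof (rule ccontr)
      assume np: "\<not> P (kth_largest s v N)"
      have "K \<subseteq> {0..<s-1}"
      proof
        fix j assume "j \<in> K"
        then have j: "j < N" "P (L ! j)" by (auto simp: K_def len)
        show "j \<in> {0..<s-1}"
        proof (rule ccontr)
          assume "j \<notin> {0..<s-1}"
          then have "L ! j \<le> L ! (s - 1)" using j by (intro mono) auto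
          then show False using np k up j by metis
        qed
      qed
      then have "card K \<le> s - 1" using card_mono[of "{0..<s-1}" K] by simp
      then show False using c cK s by simp
    qed
  qed
qed

theorem mainTheorem7:
  fixes M :: "'a measure" and t :: "nat \<Rightarrow> 'a \<Rightarrow> real" and w :: "nat \<Rightarrow> real"
    and \<epsilon> \<delta> :: real and N s :: nat
  assumes "prob_space M"
    and "0 < \<epsilon>" "\<epsilon> < 1/2" "0 < \<delta>" "\<delta> \<le> 1/2"
    and "s \<le> N" "real s \<ge> 10 * \<epsilon> powi (-2) * ln (1 / \<delta>)"
    and "\<forall>i<N. w i > 0"
    and "\<forall>i<N. w i \<le> \<epsilon> / (2 * real s) * (\<Sum>j<N. w j)"
    and "prob_space.indep_vars M (\<lambda>_. borel) t {..<N}"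
    and "\<forall>i<N. distributed M lborel (t i) (exponential_density 1)"
  shows "prob_space.prob M {x \<in> space M.
           \<bar>real s * kth_largest s (\<lambda>i. w i / t i x) N / (\<Sum>j<N. w j) - 1\<bar> \<le> 2 * \<epsilon>}
         \<ge> 1 - \<delta>"
proof -
  interpret prob_space M by fact
  note e0 = assms(2) and e1 = assms(3) and d0 = assms(4) and d1 = assms(5)
  have mt: "t i \<in> borel_measurable M" if "i < N" for i
    using distributed_measurable[OF assms(11)[rule_format, OF that]] by simp
  have wpos: "w i > 0" if "i < N" for i using assms(8) that by simp
  have ln0: "0 < ln (1/\<delta>)" using d0 d1 by (intro ln_gt_zero) (auto simp: field_simps)
  have sb: "5 * ln (1/\<delta>) \<le> \<epsilon>^2 * real s / 2" by (rule spow[OF e0 assms(7)])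
  have s0: "0 < real s"
  proof -
    have "0 < \<epsilon>^2 * real s / 2" using sb ln0 by linarith
    then show ?thesis using e0 by (simp add: zero_less_mult_iff)
  qed
  then have s1: "1 \<le> s" by simp
  have N1: "s \<le> N" by (rule assms(6))
  define W where "W = (\<Sum>j<N. w j)"
  have W0: "0 < W" unfolding W_def using s1 N1 wpos by (intro sum_pos) (auto simp: lessThan_empty_iff)
  have wle: "w i \<le> \<epsilon> / (2 * real s) * W" if "i < N" for i using assms(9) that W_def by simp
  define a where "a = (1 - 2*\<epsilon>) * W / real s"
  define b where "b = (1 + 2*\<epsilon>) * W / real s"
  have a0: "0 < a" unfolding a_def using e1 W0 s0 by simp
  have b0: "0 < b" unfolding b_def using e0 W0 s0 by simp
  define u where "u x = kth_largest s (\<lambda>i. w i / t i x) N" for x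
  define F1 where "F1 x = (\<Sum>i<N. if a \<le> w i / t i x then 1 else 0 :: real)" for x
  define F2 where "F2 x = (\<Sum>i<N. if b < w i / t i x then 1 else 0 :: real)" for x
  define B1 where "B1 = {x\<in>space M. F1 x < real s}"
  define B2 where "B2 = {x\<in>space M. real s \<le> F2 x}"
  have mF1: "F1 \<in> borel_measurable M" unfolding F1_def
  proof (rule borel_measurable_sum)
    fix i assume "i \<in> {..<N}"
    then have [measurable]: "t i \<in> borel_measurable M" by (simp add: mt)
    show "(\<lambda>x. if a \<le> w i / t i x then 1 else 0 :: real) \<in> borel_measurable M" by measurable
  qed
  have mF2: "F2 \<in> borel_measurable M" unfolding F2_def
  proof (rule borel_measurable_sum)
    fix i assume "i \<in> {..<N}"
    then have [measurable]: "t i \<in> borel_measurable M" by (simp add: mt)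
    show "(\<lambda>x. if b < w i / t i x then 1 else 0 :: real) \<in> borel_measurable M" by measurable
  qed
  have B1s: "B1 \<in> sets M" unfolding B1_def using mF1 by measurable
  have B2s: "B2 \<in> sets M" unfolding B2_def using mF2 by measurable
  have G: "{x \<in> space M. \<bar>real s * kth_largest s (\<lambda>i. w i / t i x) N / (\<Sum>j<N. w j) - 1\<bar> \<le> 2 * \<epsilon>}
      = space M - (B1 \<union> B2)"
  proof -
    have "\<bar>real s * u x / W - 1\<bar> \<le> 2 * \<epsilon> \<longleftrightarrow> \<not> (F1 x < real s) \<and> \<not> (real s \<le> F2 x)" for x
    proof -
      have "\<bar>real s * u x / W - 1\<bar> \<le> 2 * \<epsilon> \<longleftrightarrow> a \<le> u x \<and> \<not> (b < u x)"
        unfolding a_def b_def using s0 W0 by (auto simp: abs_le_iff field_simps)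
      also have "a \<le> u x \<longleftrightarrow> s \<le> card {i. i < N \<and> a \<le> w i / t i x}"
        unfolding u_def by (rule kth_largest_iff[OF _ s1 N1]) auto
      also have "\<dots> \<longleftrightarrow> \<not> (F1 x < real s)" unfolding F1_def card_sum[symmetric] by linarith
      also have "b < u x \<longleftrightarrow> s \<le> card {i. i < N \<and> b < w i / t i x}"
        unfolding u_def by (rule kth_largest_iff[OF _ s1 N1]) auto
      also have "\<dots> \<longleftrightarrow> real s \<le> F2 x" unfolding F2_def card_sum[symmetric] by linarith
      finally show ?thesis .
    qed
    then show ?thesis unfolding B1_def B2_def u_def W_def by auto
  qed
  define A1 where "A1 i = {0<..w i / a}" for i
  define A2 where "A2 i = {0<..w i / b}" for i
  have indep: "indep_vars (\<lambda>_. borel) t {..<N}" by (rule assms(10))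
  have mt': "\<And>i. i \<in> {..<N} \<Longrightarrow> t i \<in> borel_measurable M" using mt by simp
  have pA: "prob {x\<in>space M. t i x \<in> {0<..c}} = 1 - exp (- c)" if "i < N" "0 \<le> c" for i c
    by (rule exp_interval[OF assms(11)[rule_format, OF that(1)] that(2)])
  have PB2: "prob B2 \<le> \<delta> / 2"
  proof -
    define C2 where "C2 = {x\<in>space M. \<epsilon> * real s \<le> \<epsilon> * (\<Sum>i\<in>{..<N}. indicator (A2 i) (t i x))}"
    have sub: "B2 \<subseteq> C2"
    proof
      fix x assume "x \<in> B2"
      then have x: "x \<in> space M" "real s \<le> F2 x" by (auto simp: B2_def)
      have "F2 x \<le> (\<Sum>i\<in>{..<N}. indicator (A2 i) (t i x))"
        unfolding F2_def
      proof (rule sum_mono)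
        fix i assume i: "i \<in> {..<N}"
        show "(if b < w i / t i x then 1 else 0) \<le> (indicator (A2 i) (t i x) :: real)"
        proof (cases "b < w i / t i x")
          case True
          have tp: "0 < t i x"
          proof (rule ccontr)
            assume "\<not> 0 < t i x"
            then have "w i / t i x \<le> 0" using wpos[of i] i by (simp add: divide_nonneg_nonpos)
            then show False using True b0 by linarith
          qed
          then have "b * t i x < w i" using True by (simp add: field_simps)
          then have "t i x \<le> w i / b" using b0 by (simp add: field_simps)
          then show ?thesis using tp True by (simp add: A2_def indicator_def)
        qed (simp add: indicator_def)
      qed
      then show "x \<in> C2" using x e0 unfolding C2_def by simp
    qed
    have C2s: "C2 \<in> sets M"
    proof -
      have "(\<lambda>x. \<Sum>i\<in>{..<N}. indicator (A2 i) (t i x) :: real) \<in> borel_measurable M"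
      proof (rule borel_measurable_sum)
        fix i assume "i \<in> {..<N}"
        then have [measurable]: "t i \<in> borel_measurable M" by (simp add: mt)
        show "(\<lambda>x. indicator (A2 i) (t i x) :: real) \<in> borel_measurable M" unfolding A2_def by measurable
      qed
      then show ?thesis unfolding C2_def by measurable
    qed
    have "prob B2 \<le> prob C2" by (rule finite_measure_mono[OF sub C2s])
    also have "\<dots> \<le> exp (- \<epsilon> * real s + (exp \<epsilon> - 1) * (\<Sum>i\<in>{..<N}. prob {x\<in>space M. t i x \<in> A2 i}))"
      unfolding C2_def by (rule chernoff_gen[OF _ indep mt']) (auto simp: A2_def)
    also have "\<dots> \<le> exp (- (\<epsilon>^2 * real s / 2))"
    proof (subst exp_le_cancel_iff, rule R1[OF e0 e1 s0])
      have pe: "prob {x\<in>space M. t i x \<in> A2 i} = 1 - exp (- (w i / b))" if "i \<in> {..<N}" for i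
        unfolding A2_def using that wpos[of i] b0 by (intro pA) auto
      show "0 \<le> (\<Sum>i\<in>{..<N}. prob {x\<in>space M. t i x \<in> A2 i})" by (intro sum_nonneg) auto
      have "(\<Sum>i\<in>{..<N}. prob {x\<in>space M. t i x \<in> A2 i}) \<le> (\<Sum>i\<in>{..<N}. w i / b)"
      proof (rule sum_mono)
        fix i assume i: "i \<in> {..<N}"
        have "1 + (- (w i / b)) \<le> exp (- (w i / b))" by (rule exp_ge_add_one_self)
        then show "prob {x\<in>space M. t i x \<in> A2 i} \<le> w i / b" using pe[OF i] by simp
      qed
      also have "\<dots> = W / b" unfolding W_def by (simp add: sum_divide_distrib)
      also have "\<dots> = real s / (1 + 2 * \<epsilon>)"
      proof -
        have p: "0 < 1 + 2 * \<epsilon>" using e0 by simp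
        have "W / b = (real s * W) / ((1 + 2 * \<epsilon>) * W)" unfolding b_def by (simp add: mult.commute)
        also have "\<dots> = real s / (1 + 2 * \<epsilon>)" using W0 by (intro nonzero_mult_divide_mult_cancel_right) simp
        finally show ?thesis .
      qed
      finally show "(\<Sum>i\<in>{..<N}. prob {x\<in>space M. t i x \<in> A2 i}) \<le> real s / (1 + 2 * \<epsilon>)" .
    qed
    also have "\<dots> \<le> \<delta> / 2" by (rule R4[OF d0 d1 sb])
    finally show ?thesis .
  qed
  have PB1: "prob B1 \<le> \<delta> / 2"
  proof -
    define C1 where "C1 = {x\<in>space M. (- \<epsilon>) * real s \<le> (- \<epsilon>) * (\<Sum>i\<in>{..<N}. indicator (A1 i) (t i x))}"
    have sub: "B1 \<subseteq> C1"
    proof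
      fix x assume "x \<in> B1"
      then have x: "x \<in> space M" "F1 x < real s" by (auto simp: B1_def)
      have "F1 x = (\<Sum>i\<in>{..<N}. indicator (A1 i) (t i x))"
        unfolding F1_def
      proof (rule sum.cong[OF refl])
        fix i assume i: "i \<in> {..<N}"
        have "a \<le> w i / t i x \<longleftrightarrow> t i x \<in> A1 i"
        proof
          assume H: "a \<le> w i / t i x"
          have tp: "0 < t i x"
          proof (rule ccontr)
            assume "\<not> 0 < t i x"
            then have "w i / t i x \<le> 0" using wpos[of i] i by (simp add: divide_nonneg_nonpos)
            then show False using H a0 by linarith
          qed
          then have "a * t i x \<le> w i" using H by (simp add: field_simps)
          then have "t i x \<le> w i / a" using a0 by (simp add: field_simps)
          then show "t i x \<in> A1 i" using tp by (simp add: A1_def)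
        next
          assume "t i x \<in> A1 i"
          then have tp: "0 < t i x" and "t i x \<le> w i / a" by (auto simp: A1_def)
          then have "a * t i x \<le> w i" using a0 by (simp add: field_simps)
          then show "a \<le> w i / t i x" using tp by (simp add: field_simps)
        qed
        then show "(if a \<le> w i / t i x then 1 else 0) = (indicator (A1 i) (t i x) :: real)"
          by (simp add: indicator_def)
      qed
      then show "x \<in> C1" using x e0 unfolding C1_def by simp
    qed
    have C1s: "C1 \<in> sets M"
    proof -
      have "(\<lambda>x. \<Sum>i\<in>{..<N}. indicator (A1 i) (t i x) :: real) \<in> borel_measurable M"
      proof (rule borel_measurable_sum)
        fix i assume "i \<in> {..<N}"
        then have [measurable]: "t i \<in> borel_measurable M" by (simp add: mt)
        show "(\<lambda>x. indicator (A1 i) (t i x) :: real) \<in> borel_measurable M" unfolding A1_def by measurable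
      qed
      then show ?thesis unfolding C1_def by measurable
    qed
    have "prob B1 \<le> prob C1" by (rule finite_measure_mono[OF sub C1s])
    also have "\<dots> \<le> exp (- (- \<epsilon>) * real s + (exp (- \<epsilon>) - 1) * (\<Sum>i\<in>{..<N}. prob {x\<in>space M. t i x \<in> A1 i}))"
      unfolding C1_def by (rule chernoff_gen[OF _ indep mt']) (auto simp: A1_def)
    also have "\<dots> \<le> exp (- (\<epsilon>^2 * real s / 2))"
    proof -
      define r where "r = \<epsilon> / (2 * (1 - 2*\<epsilon>))"
      have pe: "prob {x\<in>space M. t i x \<in> A1 i} = 1 - exp (- (w i / a))" if "i \<in> {..<N}" for i
        unfolding A1_def using that wpos[of i] a0 by (intro pA) auto
      have r0: "0 \<le> r" unfolding r_def using e0 e1 by simp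
      have "(\<Sum>i\<in>{..<N}. (w i / a) / (1 + r)) \<le> (\<Sum>i\<in>{..<N}. prob {x\<in>space M. t i x \<in> A1 i})"
      proof (rule sum_mono)
        fix i assume i: "i \<in> {..<N}"
        have "w i / a \<le> (\<epsilon> / (2 * real s) * W) / a" using wle[of i] i a0 by (intro divide_right_mono) auto
        also have "\<dots> = r" unfolding r_def a_def using W0 s0 e1 by (simp add: field_simps)
        finally have "w i / a \<le> r" .
        then show "(w i / a) / (1 + r) \<le> prob {x\<in>space M. t i x \<in> A1 i}"
          using pe[OF i] R3[of "w i / a" r] wpos[of i] i a0 by simp
      qed
      moreover have "(\<Sum>i\<in>{..<N}. (w i / a) / (1 + r)) = real s / (1 - 3*\<epsilon>/2)"
      proof -
        have "(\<Sum>i\<in>{..<N}. (w i / a) / (1 + r)) = W / a / (1 + r)"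
          unfolding W_def by (simp add: sum_divide_distrib)
        also have "\<dots> = real s / (1 - 3*\<epsilon>/2)"
        proof -
          have p1: "0 < 1 - 2 * \<epsilon>" and p2: "0 < 2 - 3 * \<epsilon>" and p3: "0 < 1 - 3 * \<epsilon> / 2" using e1 by auto
          have "W / a = (real s * W) / ((1 - 2 * \<epsilon>) * W)" unfolding a_def by (simp add: mult.commute)
          also have "\<dots> = real s / (1 - 2 * \<epsilon>)" using W0 by (intro nonzero_mult_divide_mult_cancel_right) simp
          finally have Wa: "W / a = real s / (1 - 2 * \<epsilon>)" .
          have r1: "1 + r = (2 - 3 * \<epsilon>) / (2 * (1 - 2 * \<epsilon>))" unfolding r_def using p1 by (simp add: field_simps)
          have aux: "x / D1 / (D2 / (2 * D1)) = 2 * x / D2" if "D1 \<noteq> 0" "D2 \<noteq> 0" for x D1 D2 :: real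
            using that by (simp add: field_simps)
          have aux2: "x / (D / 2) = 2 * x / D" for x D :: real by simp
          have h: "1 - 3 * \<epsilon> / 2 = (2 - 3 * \<epsilon>) / 2" by simp
          show ?thesis unfolding Wa r1 h aux2 using p1 p2 by (intro aux) auto
        qed
        finally show ?thesis .
      qed
      ultimately have "real s / (1 - 3*\<epsilon>/2) \<le> (\<Sum>i\<in>{..<N}. prob {x\<in>space M. t i x \<in> A1 i})" by simp
      from R2[OF e0 e1 s0 this] show ?thesis by simp
    qed
    also have "\<dots> \<le> \<delta> / 2" by (rule R4[OF d0 d1 sb])
    finally show ?thesis .
  qed
  have "prob (B1 \<union> B2) \<le> prob B1 + prob B2" by (rule measure_Un_le[OF B1s B2s])
  moreover have "prob (space M - (B1 \<union> B2)) = 1 - prob (B1 \<union> B2)"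
    using B1s B2s by (intro prob_compl) auto
  ultimately show ?thesis unfolding G using PB1 PB2 by linarith
qed

end
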